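(* For $\mathbf{R}=(\mathbf{R}_t)_{t=1}^T\in\mathrm{SO}(3)^T$ and $\mathbf{s}=(\mathbf{s}_t)_{t=1}^T\in(\mathbb{R}^3)^T$ define $$\mathbf{c}^\star(\mathbf{R},\mathbf{s}) \triangleq 2\mathbf{G}\Big(\mathbf{B}^\mathsf{T}\sum_{t=1}^T \mathbf{W}_t \begin{bmatrix}\mathbf{R}_t^\mathsf{T}\mathbf{y}_t^1-\mathbf{s}_t\\ \vdots\\ \mathbf{R}_t^\mathsf{T}\mathbf{y}_t^N-\mathbf{s}_t\end{bmatrix} + \lambda\bar{\mathbf{c}}\Big)+\mathbf{g},$$ which is affine in the entries of $(\mathbf{R},\mathbf{s})$. Let (Q) be the problem: minimize over $\mathbf{R}_t\in\mathrm{SO}(3)$, $\mathbf{s}_t\in\mathbb{R}^3$ ($t=1,\dots,T$), $\boldsymbol{\Omega}_t\in\mathrm{SO}(3)$, $\mathbf{v}_t\in\mathbb{R}^3$ ($t=1,\dots,T-1$) the objective $$\sum_{t=1}^T\sum_{i=1}^N w_t^i\|\mathbf{R}_t^\mathsf{T}\mathbf{y}_t^i-\mathbf{B}_i\mathbf{c}^\star-\mathbf{s}_t\|^2+\lambda\|\mathbf{c}^\star-\bar{\mathbf{c}}\|^2+\sum_{t=1}^{T-2}\big(\omega_t\|\mathbf{v}_{t+1}-\mathbf{v}_t\|^2+\kappa_t\|\boldsymbol{\Omega}_{t+1}-\boldsymbol{\Omega}_t\|_F^2\big),$$ with $\mathbf{c}^\star=\mathbf{c}^\star(\mathbf{R},\mathbf{s})$,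 subject to $\boldsymbol{\Omega}_t\mathbf{s}_{t+1}=\mathbf{s}_t+\mathbf{v}_t$ and $\mathbf{R}_{t+1}=\mathbf{R}_t\boldsymbol{\Omega}_t$ for $t=1,\dots,T-1$. Then: (i) (P) and (Q) have the same optimal value, and $(\mathbf{R}_t,\mathbf{p}_t,\mathbf{v}_t,\boldsymbol{\Omega}_t,\mathbf{c})$ is optimal for (P) if and only if $(\mathbf{R}_t,\mathbf{s}_t,\mathbf{v}_t,\boldsymbol{\Omega}_t)$ with $\mathbf{s}_t=\mathbf{R}_t^\mathsf{T}\mathbf{p}_t$ is optimal for (Q) and $\mathbf{c}=\mathbf{c}^\star(\mathbf{R},\mathbf{s})$; (ii) (Q) is a quadratically constrained quadratic program: its objective is a polynomial of degree at most $2$ in the entries of $(\mathbf{R}_t,\mathbf{s}_t,\mathbf{v}_t,\boldsymbol{\Omega}_t)$, and all its constraints (including membership in $\mathrm{SO}(3)$) can be written as polynomial equations of degree at most $2$ in these entries.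
   Context: Data: integers $T\ge 2$, $N\ge1$, $K\ge1$; matrices $\mathbf{B}_i\in\mathbb{R}^{3\times K}$ ($i=1,\dots,N$); measurements $\mathbf{y}_t^i\in\mathbb{R}^3$; weights $w_t^i>0$, $\omega_t\ge0$, $\kappa_t\ge0$, $\lambda>0$; $\bar{\mathbf{c}}\triangleq\frac1K\mathbf{1}_K$. Notation: $\mathbf{W}_t \triangleq \mathrm{blkdiag}(w_t^1\mathbf{I}_3,\dots,w_t^N\mathbf{I}_3)$, $\mathbf{B}\triangleq[\mathbf{B}_1^\mathsf{T},\dots,\mathbf{B}_N^\mathsf{T}]^\mathsf{T}\in\mathbb{R}^{3N\times K}$, $\mathbf{H}\triangleq \tfrac12(\mathbf{B}^\mathsf{T}(\sum_t\mathbf{W}_t)\mathbf{B}+\lambda\mathbf{I}_K)^{-1}$, $\mathbf{G}\triangleq \mathbf{H}-\frac{\mathbf{H}\mathbf{1}_K\mathbf{1}_K^\mathsf{T}\mathbf{H}}{\mathbf{1}_K^\mathsf{T}\mathbf{H}\mathbf{1}_K}$, $\mathbf{g}\triangleq\frac{\mathbf{H}\mathbf{1}_K}{\mathbf{1}_K^\mathsf{T}\mathbf{H}\mathbf{1}_K}$. Problem (P): minimize over $\mathbf{R}_t\in\mathrm{SO}(3)$, $\mathbf{p}_t\in\mathbb{R}^3$ ($t=1,\dots,T$), $\boldsymbol{\Omega}_t\in\mathrm{SO}(3)$, $\mathbf{v}_t\in\mathbb{R}^3$ ($t=1,\dots,T-1$), $\mathbf{c}\in\mathbb{R}^K$ with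 $\mathbf{1}_K^\mathsf{T}\mathbf{c}=1$ the objective $$\sum_{t=1}^T\sum_{i=1}^N w_t^i\|\mathbf{y}_t^i-\mathbf{R}_t\mathbf{B}_i\mathbf{c}-\mathbf{p}_t\|^2+\lambda\|\mathbf{c}-\bar{\mathbf{c}}\|^2+\sum_{t=1}^{T-2}\big(\omega_t\|\mathbf{v}_{t+1}-\mathbf{v}_t\|^2+\kappa_t\|\boldsymbol{\Omega}_{t+1}-\boldsymbol{\Omega}_t\|_F^2\big)$$ subject to $\mathbf{p}_{t+1}=\mathbf{p}_t+\mathbf{R}_t\mathbf{v}_t$, $\mathbf{R}_{t+1}=\mathbf{R}_t\boldsymbol{\Omega}_t$ for $t=1,\dots,T-1$. *)

theory Defs
  imports "HOL-Analysis.Analysis"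
begin

definition SO3 :: "(real^3^3) set" where
  "SO3 = {Q. rotation_matrix Q}"

definition ones :: "real^'k" where
  "ones = (\<chi> i. 1)"

definition cbar :: "real^'k::finite" where
  "cbar = (\<chi> i. 1 / real CARD('k))"

definition outer :: "real^'m \<Rightarrow> real^'n \<Rightarrow> real^'n^'m" where
  "outer u v = (\<chi> i j. u $ i * v $ j)"

text \<open>H = 1/2 (B^T (sum_t W_t) B + lambda I)^{-1}, with B^T W_t B = sum_i w_t^i B_i^T B_i.\<close>
definition Hmat :: "nat \<Rightarrow> nat \<Rightarrow> (nat \<Rightarrow> real^'k^3) \<Rightarrow> (nat \<Rightarrow> nat \<Rightarrow> real) \<Rightarrow> real \<Rightarrow> real^'k^'k::finite" where
  "Hmat T N B w lam = (1/2) *\<^sub>R matrix_inv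
     ((\<Sum>t\<in>{1..T}. \<Sum>i\<in>{1..N}. w t i *\<^sub>R (transpose (B i) ** B i)) + lam *\<^sub>R mat 1)"

definition Gmat :: "nat \<Rightarrow> nat \<Rightarrow> (nat \<Rightarrow> real^'k^3) \<Rightarrow> (nat \<Rightarrow> nat \<Rightarrow> real) \<Rightarrow> real \<Rightarrow> real^'k^'k::finite" where
  "Gmat T N B w lam = (let H = Hmat T N B w lam in
     H - (1 / (ones \<bullet> (H *v ones))) *\<^sub>R outer (H *v ones) (transpose H *v ones))"

definition gvec :: "nat \<Rightarrow> nat \<Rightarrow> (nat \<Rightarrow> real^'k^3) \<Rightarrow> (nat \<Rightarrow> nat \<Rightarrow> real) \<Rightarrow> real \<Rightarrow> real^'k::finite" where
  "gvec T N B w lam = (let H = Hmat T N B w lam in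
     (1 / (ones \<bullet> (H *v ones))) *\<^sub>R (H *v ones))"

definition cstar :: "nat \<Rightarrow> nat \<Rightarrow> (nat \<Rightarrow> real^'k^3) \<Rightarrow> (nat \<Rightarrow> nat \<Rightarrow> real^3)
    \<Rightarrow> (nat \<Rightarrow> nat \<Rightarrow> real) \<Rightarrow> real \<Rightarrow> (nat \<Rightarrow> real^3^3) \<Rightarrow> (nat \<Rightarrow> real^3) \<Rightarrow> real^'k::finite" where
  "cstar T N B y w lam R s =
     2 *\<^sub>R (Gmat T N B w lam *v
        ((\<Sum>t\<in>{1..T}. \<Sum>i\<in>{1..N}. w t i *\<^sub>R (transpose (B i) *v (transpose (R t) *v y t i - s t)))
         + lam *\<^sub>R cbar))
     + gvec T N B w lam"

text \<open>Smoothness regularizer; norm on real^3^3 is the Frobenius norm.\<close>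
definition reg :: "nat \<Rightarrow> (nat \<Rightarrow> real) \<Rightarrow> (nat \<Rightarrow> real) \<Rightarrow> (nat \<Rightarrow> real^3) \<Rightarrow> (nat \<Rightarrow> real^3^3) \<Rightarrow> real" where
  "reg T om ka v Om = (\<Sum>t\<in>{1..T-2}. om t * (norm (v (Suc t) - v t))\<^sup>2
                                     + ka t * (norm (Om (Suc t) - Om t))\<^sup>2)"

definition objP :: "nat \<Rightarrow> nat \<Rightarrow> (nat \<Rightarrow> real^'k^3) \<Rightarrow> (nat \<Rightarrow> nat \<Rightarrow> real^3)
    \<Rightarrow> (nat \<Rightarrow> nat \<Rightarrow> real) \<Rightarrow> (nat \<Rightarrow> real) \<Rightarrow> (nat \<Rightarrow> real) \<Rightarrow> real
    \<Rightarrow> (nat \<Rightarrow> real^3^3) \<Rightarrow> (nat \<Rightarrow> real^3) \<Rightarrow> (nat \<Rightarrow> real^3) \<Rightarrow> (nat \<Rightarrow> real^3^3) \<Rightarrow> real^'k::finite \<Rightarrow> real" where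
  "objP T N B y w om ka lam R p v Om c =
     (\<Sum>t\<in>{1..T}. \<Sum>i\<in>{1..N}. w t i * (norm (y t i - R t *v (B i *v c) - p t))\<^sup>2)
     + lam * (norm (c - cbar))\<^sup>2 + reg T om ka v Om"

definition feasP :: "nat \<Rightarrow> (nat \<Rightarrow> real^3^3) \<Rightarrow> (nat \<Rightarrow> real^3) \<Rightarrow> (nat \<Rightarrow> real^3)
    \<Rightarrow> (nat \<Rightarrow> real^3^3) \<Rightarrow> real^'k::finite \<Rightarrow> bool" where
  "feasP T R p v Om c \<longleftrightarrow>
     (\<forall>t\<in>{1..T}. R t \<in> SO3) \<and> (\<forall>t\<in>{1..T-1}. Om t \<in> SO3) \<and> (\<Sum>k\<in>UNIV. c $ k) = 1 \<and>
     (\<forall>t\<in>{1..T-1}. p (Suc t) = p t + R t *v v t \<and> R (Suc t) = R t ** Om t)"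

definition valP :: "nat \<Rightarrow> nat \<Rightarrow> (nat \<Rightarrow> real^'k^3) \<Rightarrow> (nat \<Rightarrow> nat \<Rightarrow> real^3)
    \<Rightarrow> (nat \<Rightarrow> nat \<Rightarrow> real) \<Rightarrow> (nat \<Rightarrow> real) \<Rightarrow> (nat \<Rightarrow> real) \<Rightarrow> real \<Rightarrow> real" where
  "valP T N B y w om ka lam =
     Inf {objP T N B y w om ka lam R p v Om c | R p v Om c. feasP T R p v Om c}"

definition optP :: "nat \<Rightarrow> nat \<Rightarrow> (nat \<Rightarrow> real^'k^3) \<Rightarrow> (nat \<Rightarrow> nat \<Rightarrow> real^3)
    \<Rightarrow> (nat \<Rightarrow> nat \<Rightarrow> real) \<Rightarrow> (nat \<Rightarrow> real) \<Rightarrow> (nat \<Rightarrow> real) \<Rightarrow> real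
    \<Rightarrow> (nat \<Rightarrow> real^3^3) \<Rightarrow> (nat \<Rightarrow> real^3) \<Rightarrow> (nat \<Rightarrow> real^3) \<Rightarrow> (nat \<Rightarrow> real^3^3) \<Rightarrow> real^'k::finite \<Rightarrow> bool" where
  "optP T N B y w om ka lam R p v Om c \<longleftrightarrow> feasP T R p v Om c \<and>
     (\<forall>R' p' v' Om' c'. feasP T R' p' v' Om' c' \<longrightarrow>
        objP T N B y w om ka lam R p v Om c \<le> objP T N B y w om ka lam R' p' v' Om' c')"

definition objQ :: "nat \<Rightarrow> nat \<Rightarrow> (nat \<Rightarrow> real^'k::finite^3) \<Rightarrow> (nat \<Rightarrow> nat \<Rightarrow> real^3)
    \<Rightarrow> (nat \<Rightarrow> nat \<Rightarrow> real) \<Rightarrow> (nat \<Rightarrow> real) \<Rightarrow> (nat \<Rightarrow> real) \<Rightarrow> real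
    \<Rightarrow> (nat \<Rightarrow> real^3^3) \<Rightarrow> (nat \<Rightarrow> real^3) \<Rightarrow> (nat \<Rightarrow> real^3) \<Rightarrow> (nat \<Rightarrow> real^3^3) \<Rightarrow> real" where
  "objQ T N B y w om ka lam R s v Om =
     (let c = (cstar T N B y w lam R s :: real^'k) in
       (\<Sum>t\<in>{1..T}. \<Sum>i\<in>{1..N}. w t i * (norm (transpose (R t) *v y t i - B i *v c - s t))\<^sup>2)
       + lam * (norm (c - cbar))\<^sup>2 + reg T om ka v Om)"

definition feasQ :: "nat \<Rightarrow> (nat \<Rightarrow> real^3^3) \<Rightarrow> (nat \<Rightarrow> real^3) \<Rightarrow> (nat \<Rightarrow> real^3)
    \<Rightarrow> (nat \<Rightarrow> real^3^3) \<Rightarrow> bool" where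
  "feasQ T R s v Om \<longleftrightarrow>
     (\<forall>t\<in>{1..T}. R t \<in> SO3) \<and> (\<forall>t\<in>{1..T-1}. Om t \<in> SO3) \<and>
     (\<forall>t\<in>{1..T-1}. Om t *v s (Suc t) = s t + v t \<and> R (Suc t) = R t ** Om t)"

definition valQ :: "nat \<Rightarrow> nat \<Rightarrow> (nat \<Rightarrow> real^'k::finite^3) \<Rightarrow> (nat \<Rightarrow> nat \<Rightarrow> real^3)
    \<Rightarrow> (nat \<Rightarrow> nat \<Rightarrow> real) \<Rightarrow> (nat \<Rightarrow> real) \<Rightarrow> (nat \<Rightarrow> real) \<Rightarrow> real \<Rightarrow> real" where
  "valQ T N B y w om ka lam =
     Inf {objQ T N B y w om ka lam R s v Om | R s v Om. feasQ T R s v Om}"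

definition optQ :: "nat \<Rightarrow> nat \<Rightarrow> (nat \<Rightarrow> real^'k::finite^3) \<Rightarrow> (nat \<Rightarrow> nat \<Rightarrow> real^3)
    \<Rightarrow> (nat \<Rightarrow> nat \<Rightarrow> real) \<Rightarrow> (nat \<Rightarrow> real) \<Rightarrow> (nat \<Rightarrow> real) \<Rightarrow> real
    \<Rightarrow> (nat \<Rightarrow> real^3^3) \<Rightarrow> (nat \<Rightarrow> real^3) \<Rightarrow> (nat \<Rightarrow> real^3) \<Rightarrow> (nat \<Rightarrow> real^3^3) \<Rightarrow> bool" where
  "optQ T N B y w om ka lam R s v Om \<longleftrightarrow> feasQ T R s v Om \<and>
     (\<forall>R' s' v' Om'. feasQ T R' s' v' Om' \<longrightarrow>
        objQ T N B y w om ka lam R s v Om \<le> objQ T N B y w om ka lam R' s' v' Om')"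

datatype qvar = VR nat 3 3 | VS nat 3 | VV nat 3 | VOm nat 3 3

definition qvars :: "nat \<Rightarrow> qvar set" where
  "qvars T = {VR t i j | t i j. t \<in> {1..T}} \<union> {VS t i | t i. t \<in> {1..T}}
           \<union> {VV t i | t i. t \<in> {1..T-1}} \<union> {VOm t i j | t i j. t \<in> {1..T-1}}"

definition entries :: "(nat \<Rightarrow> real^3^3) \<Rightarrow> (nat \<Rightarrow> real^3) \<Rightarrow> (nat \<Rightarrow> real^3) \<Rightarrow> (nat \<Rightarrow> real^3^3)
    \<Rightarrow> qvar \<Rightarrow> real" where
  "entries R s v Om x = (case x of VR t i j \<Rightarrow> R t $ i $ j | VS t i \<Rightarrow> s t $ i
                         | VV t i \<Rightarrow> v t $ i | VOm t i j \<Rightarrow> Om t $ i $ j)"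

definition deg2_poly :: "qvar set \<Rightarrow> ((qvar \<Rightarrow> real) \<Rightarrow> real) \<Rightarrow> bool" where
  "deg2_poly I q \<longleftrightarrow> (\<exists>a0 a b. \<forall>z. q z = a0 + (\<Sum>j\<in>I. a j * z j) + (\<Sum>j\<in>I. \<Sum>k\<in>I. b j k * z j * z k))"

end

theory Submission
  imports Defs
begin


declare transpose_matrix_vector[simp del]

lemma inner_mv: "(A *v x) \<bullet> (y::real^_) = x \<bullet> (transpose A *v y)"
  by (metis dot_lmul_matrix vector_transpose_matrix)

lemma norm_orth:
  assumes "orthogonal_matrix Q" shows "norm (Q *v (x::real^'n)) = norm x"
proof -
  have "(norm (Q *v x))\<^sup>2 = (norm x)\<^sup>2"
    using assms by (simp add: power2_norm_eq_inner inner_mv matrix_vector_mul_assoc orthogonal_matrix)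
  then show ?thesis by (simp add: power2_eq_iff_nonneg)
qed

lemma sum_mv: "(\<Sum>i\<in>A. f i) *v (x::real^_) = (\<Sum>i\<in>A. f i *v x)"
  by (induction A rule: infinite_finite_induct) (auto simp: matrix_vector_mult_add_rdistrib)

definition Mmat :: "nat \<Rightarrow> nat \<Rightarrow> (nat \<Rightarrow> real^'k^3) \<Rightarrow> (nat \<Rightarrow> nat \<Rightarrow> real) \<Rightarrow> real \<Rightarrow> real^'k^'k::finite" where
  "Mmat T N B w lam = (\<Sum>t\<in>{1..T}. \<Sum>i\<in>{1..N}. w t i *\<^sub>R (transpose (B i) ** B i)) + lam *\<^sub>R mat 1"

lemma Mmat_mv: "Mmat T N B w lam *v x =
   (\<Sum>t\<in>{1..T}. \<Sum>i\<in>{1..N}. w t i *\<^sub>R (transpose (B i) *v (B i *v x))) + lam *\<^sub>R x"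
  by (simp add: Mmat_def matrix_vector_mult_add_rdistrib sum_mv scaleR_matrix_vector_assoc[symmetric]
      matrix_vector_mul_assoc)

lemma Mmat_quad: "x \<bullet> (Mmat T N B w lam *v x) =
   (\<Sum>t\<in>{1..T}. \<Sum>i\<in>{1..N}. w t i * (norm (B i *v x))\<^sup>2) + lam * (norm x)\<^sup>2"
  by (simp add: Mmat_mv inner_sum_right inner_add_right power2_norm_eq_inner inner_mv)

lemma Mmat_quad_ge:
  assumes "\<forall>t\<in>{1..T}. \<forall>i\<in>{1..N}. w t i \<ge> 0"
  shows "x \<bullet> (Mmat T N B w lam *v x) \<ge> lam * (norm x)\<^sup>2"
proof -
  have "(\<Sum>t\<in>{1..T}. \<Sum>i\<in>{1..N}. w t i * (norm (B i *v x))\<^sup>2) \<ge> 0"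
    using assms by (intro sum_nonneg) auto
  then show ?thesis by (simp add: Mmat_quad)
qed

lemma Mmat_inv:
  assumes "\<forall>t\<in>{1..T}. \<forall>i\<in>{1..N}. w t i \<ge> 0" "lam > 0"
  shows "Mmat T N B w lam ** matrix_inv (Mmat T N B w lam) = mat 1"
proof -
  let ?M = "Mmat T N B w lam"
  have "\<forall>x. ?M *v x = 0 \<longrightarrow> x = 0"
  proof (intro allI impI)
    fix x assume "?M *v x = 0"
    then have "lam * (norm x)\<^sup>2 \<le> 0" using Mmat_quad_ge[OF assms(1), where x=x and B=B and lam=lam] by simp
    then show "x = 0" using assms(2)
      by (metis mult_pos_pos norm_eq_zero not_less zero_less_norm_iff zero_less_power)
  qed
  then have "invertible ?M" by (simp add: invertible_left_inverse matrix_left_invertible_ker)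
  then show ?thesis unfolding matrix_inv_def invertible_def by (rule someI2_ex) auto
qed

lemma Hmat_eq: "Hmat T N B w lam = (1/2) *\<^sub>R matrix_inv (Mmat T N B w lam)"
  by (simp add: Hmat_def Mmat_def)

lemma MH:
  assumes "\<forall>t\<in>{1..T}. \<forall>i\<in>{1..N}. w t i \<ge> 0" "lam > 0"
  shows "Mmat T N B w lam *v (Hmat T N B w lam *v x) = (1/2) *\<^sub>R x"
  by (simp add: Hmat_eq scaleR_matrix_vector_assoc[symmetric] matrix_vector_mult_scaleR matrix_vector_mul_assoc Mmat_inv[OF assms])

lemma outer_mv: "outer u v *v x = (v \<bullet> x) *\<^sub>R (u::real^_)"
  by (simp add: outer_def matrix_vector_mult_def vec_eq_iff inner_vec_def sum_distrib_left algebra_simps)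

definition Fq :: "nat \<Rightarrow> nat \<Rightarrow> (nat \<Rightarrow> real^'k^3) \<Rightarrow> (nat \<Rightarrow> nat \<Rightarrow> real) \<Rightarrow> real \<Rightarrow> (nat \<Rightarrow> nat \<Rightarrow> real^3) \<Rightarrow> real^'k::finite \<Rightarrow> real" where
  "Fq T N B w lam a c = (\<Sum>t\<in>{1..T}. \<Sum>i\<in>{1..N}. w t i * (norm (a t i - B i *v c))\<^sup>2) + lam * (norm (c - cbar))\<^sup>2"

definition bv :: "nat \<Rightarrow> nat \<Rightarrow> (nat \<Rightarrow> real^'k^3) \<Rightarrow> (nat \<Rightarrow> nat \<Rightarrow> real) \<Rightarrow> real \<Rightarrow> (nat \<Rightarrow> nat \<Rightarrow> real^3) \<Rightarrow> real^'k::finite" where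
  "bv T N B w lam a = (\<Sum>t\<in>{1..T}. \<Sum>i\<in>{1..N}. w t i *\<^sub>R (transpose (B i) *v a t i)) + lam *\<^sub>R cbar"

lemma bv_minus: "bv T N B w lam a - Mmat T N B w lam *v c =
  (\<Sum>t\<in>{1..T}. \<Sum>i\<in>{1..N}. w t i *\<^sub>R (transpose (B i) *v (a t i - B i *v c))) + lam *\<^sub>R (cbar - c)"
  by (simp add: bv_def Mmat_mv matrix_vector_mult_diff_distrib scaleR_diff_right sum_subtractf algebra_simps)

lemma norm_diff_sq: "(norm (u - v))\<^sup>2 = (norm u)\<^sup>2 - 2 * (v \<bullet> u) + v \<bullet> (v::real^_)"
  by (simp add: power2_norm_eq_inner inner_diff_left inner_diff_right inner_commute)

lemma term_expand: fixes B :: "real^'n^'m" shows "(norm (a - B *v (c + d)))\<^sup>2 =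
   (norm (a - B *v c))\<^sup>2 - 2 * (d \<bullet> (transpose B *v (a - B *v c))) + d \<bullet> (transpose B *v (B *v d))"
proof -
  have e: "a - B *v (c + d) = (a - B *v c) - B *v d" by (simp add: matrix_vector_right_distrib)
  show ?thesis unfolding e
    using norm_diff_sq[of "a - B *v c" "B *v d"] inner_mv[of B d "a - B *v c"] inner_mv[of B d "B *v d"]
    by simp
qed

lemma lam_expand: "(norm (c + d - cb))\<^sup>2 = (norm (c - cb))\<^sup>2 - 2 * (d \<bullet> (cb - c)) + d \<bullet> (d::real^_)"
  by (simp add: power2_norm_eq_inner inner_diff_left inner_diff_right inner_add_left inner_add_right inner_commute)

lemma Fq_expand: "Fq T N B w lam a (c + d) =
   Fq T N B w lam a c - 2 * (d \<bullet> (bv T N B w lam a - Mmat T N B w lam *v c)) + d \<bullet> (Mmat T N B w lam *v d)"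
proof -
  have "Fq T N B w lam a (c + d) = (\<Sum>t\<in>{1..T}. \<Sum>i\<in>{1..N}. w t i * ((norm (a t i - B i *v c))\<^sup>2
      - 2 * (d \<bullet> (transpose (B i) *v (a t i - B i *v c))) + d \<bullet> (transpose (B i) *v (B i *v d))))
     + lam * ((norm (c - cbar))\<^sup>2 - 2 * (d \<bullet> (cbar - c)) + d \<bullet> d)"
    unfolding Fq_def term_expand lam_expand ..
  also have "\<dots> = Fq T N B w lam a c - 2 * ((\<Sum>t\<in>{1..T}. \<Sum>i\<in>{1..N}. w t i * (d \<bullet> (transpose (B i) *v (a t i - B i *v c)))) + lam * (d \<bullet> (cbar - c)))
     + ((\<Sum>t\<in>{1..T}. \<Sum>i\<in>{1..N}. w t i * (d \<bullet> (transpose (B i) *v (B i *v d)))) + lam * (d \<bullet> d))"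
    unfolding Fq_def by (simp add: algebra_simps sum.distrib sum_subtractf sum_distrib_left)
  also have "\<dots> = Fq T N B w lam a c - 2 * (d \<bullet> (bv T N B w lam a - Mmat T N B w lam *v c)) + d \<bullet> (Mmat T N B w lam *v d)"
    by (simp only: bv_minus) (simp add: Mmat_mv inner_sum_right inner_add_right)
  finally show ?thesis .
qed


lemma ones_inner: "ones \<bullet> (c::real^'k::finite) = (\<Sum>k\<in>UNIV. c $ k)"
  by (simp add: ones_def inner_vec_def)

lemma ones_nz: "(ones::real^'k::finite) \<noteq> 0"
  by (simp add: ones_def vec_eq_iff)

locale qp =
  fixes T N :: nat and B :: "nat \<Rightarrow> real^'k::finite^3" and w :: "nat \<Rightarrow> nat \<Rightarrow> real" and lam :: real
  assumes wpos: "\<forall>t\<in>{1..T}. \<forall>i\<in>{1..N}. w t i \<ge> 0" and lampos: "lam > 0"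
begin

abbreviation "M \<equiv> Mmat T N B w lam"
abbreviation "H \<equiv> Hmat T N B w lam"
abbreviation "alpha \<equiv> (ones::real^'k) \<bullet> (H *v ones)"

lemma MHx: "M *v (H *v x) = (1/2) *\<^sub>R x"
  using MH[OF wpos lampos] .

lemma alpha_pos: "alpha > 0"
proof -
  let ?u = "H *v ones"
  have "?u \<bullet> (M *v ?u) = alpha / 2" by (simp add: MHx inner_commute)
  moreover have "?u \<bullet> (M *v ?u) \<ge> lam * (norm ?u)\<^sup>2" by (rule Mmat_quad_ge[OF wpos])
  moreover have "?u \<noteq> 0" using MHx[of ones] ones_nz by auto
  then have "lam * (norm ?u)\<^sup>2 > 0" using lampos by simp
  ultimately show ?thesis by linarith
qed

lemma G_mv: "Gmat T N B w lam *v b = H *v b - ((transpose H *v ones) \<bullet> b / alpha) *\<^sub>R (H *v ones)"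
  by (simp add: Gmat_def Let_def matrix_vector_mult_diff_rdistrib scaleR_matrix_vector_assoc[symmetric] outer_mv)

lemma g_eq: "gvec T N B w lam = (1 / alpha) *\<^sub>R (H *v ones)"
  by (simp add: gvec_def Let_def)

lemma Mc0: "M *v (2 *\<^sub>R (Gmat T N B w lam *v b) + gvec T N B w lam) =
   b - (((transpose H *v ones) \<bullet> b) / alpha - 1 / (2 * alpha)) *\<^sub>R ones"
  by (simp add: G_mv g_eq matrix_vector_right_distrib matrix_vector_mult_diff_distrib
      matrix_vector_mult_scaleR MHx algebra_simps)

lemma sum_c0: "ones \<bullet> (2 *\<^sub>R (Gmat T N B w lam *v b) + gvec T N B w lam) = 1"
proof -
  have a: "ones \<bullet> (H *v b) = (transpose H *v ones) \<bullet> b"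
    by (metis inner_commute inner_mv)
  show ?thesis using alpha_pos
    by (simp add: G_mv g_eq inner_add_right inner_diff_right a)
qed

lemma Fq_min:
  fixes a :: "nat \<Rightarrow> nat \<Rightarrow> real^3" and c :: "real^'k"
  assumes "(\<Sum>k\<in>UNIV. c $ k) = 1"
  defines "c0 \<equiv> 2 *\<^sub>R (Gmat T N B w lam *v bv T N B w lam a) + gvec T N B w lam"
  shows "Fq T N B w lam a c \<ge> Fq T N B w lam a c0 + lam * (norm (c - c0))\<^sup>2"
proof -
  define d where "d = c - c0"
  have c: "c = c0 + d" by (simp add: d_def)
  have d0: "d \<bullet> ones = 0"
    using assms(1) sum_c0[of "bv T N B w lam a"] unfolding d_def c0_def
    by (simp add: inner_diff_left inner_commute ones_inner sum_subtractf)
  have "d \<bullet> (bv T N B w lam a - M *v c0) = 0"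
    unfolding c0_def Mc0 by (simp add: inner_diff_right d0)
  then have "Fq T N B w lam a c = Fq T N B w lam a c0 + d \<bullet> (M *v d)"
    unfolding c Fq_expand by simp
  moreover have "d \<bullet> (M *v d) \<ge> lam * (norm d)\<^sup>2" by (rule Mmat_quad_ge[OF wpos])
  ultimately show ?thesis by (simp add: d_def)
qed

end


lemma SO3_orth: "X \<in> SO3 \<Longrightarrow> orthogonal_matrix X"
  by (simp add: SO3_def rotation_matrix_def)

lemma orth_TM: "orthogonal_matrix X \<Longrightarrow> transpose X ** X = mat 1"
  by (simp add: orthogonal_matrix_def)
lemma orth_MT: "orthogonal_matrix X \<Longrightarrow> X ** transpose X = mat 1"
  by (simp add: orthogonal_matrix_def)

definition aQ :: "(nat \<Rightarrow> nat \<Rightarrow> real^3) \<Rightarrow> (nat \<Rightarrow> real^3^3) \<Rightarrow> (nat \<Rightarrow> real^3) \<Rightarrow> nat \<Rightarrow> nat \<Rightarrow> real^3" where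
  "aQ y R s = (\<lambda>t i. transpose (R t) *v y t i - s t)"

lemma cstar_eq: "cstar T N B y w lam R s = 2 *\<^sub>R (Gmat T N B w lam *v bv T N B w lam (aQ y R s)) + gvec T N B w lam"
  by (simp add: cstar_def bv_def aQ_def)

lemma objQ_eq: "objQ T N B y w om ka lam R s v Om =
   Fq T N B w lam (aQ y R s) (cstar T N B y w lam R s) + reg T om ka v Om"
  unfolding objQ_def Fq_def Let_def aQ_def by (simp add: algebra_simps)

lemma objP_eq:
  assumes "\<forall>t\<in>{1..T}. orthogonal_matrix (R t)"
  shows "objP T N B y w om ka lam R p v Om c =
   Fq T N B w lam (aQ y R (\<lambda>t. transpose (R t) *v p t)) c + reg T om ka v Om"
proof -
  have "norm (y t i - R t *v (B i *v c) - p t) = norm (aQ y R (\<lambda>t. transpose (R t) *v p t) t i - B i *v c)"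
    if "t \<in> {1..T}" for t i
  proof -
    have o: "orthogonal_matrix (transpose (R t))" using assms that by simp
    have z: "transpose (R t) *v (R t *v z) = z" for z
      using matrix_vector_mul_assoc[of "transpose (R t)" "R t" z] orth_TM[of "R t"] assms that by simp
    have "norm (y t i - R t *v (B i *v c) - p t) = norm (transpose (R t) *v (y t i - R t *v (B i *v c) - p t))"
      using norm_orth[OF o] by simp
    also have "transpose (R t) *v (y t i - R t *v (B i *v c) - p t) = aQ y R (\<lambda>t. transpose (R t) *v p t) t i - B i *v c"
      by (simp add: aQ_def matrix_vector_mult_diff_distrib z algebra_simps)
    finally show ?thesis .
  qed
  then have "(\<Sum>t\<in>{1..T}. \<Sum>i\<in>{1..N}. w t i * (norm (y t i - R t *v (B i *v c) - p t))\<^sup>2) =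
     (\<Sum>t\<in>{1..T}. \<Sum>i\<in>{1..N}. w t i * (norm (aQ y R (\<lambda>t. transpose (R t) *v p t) t i - B i *v c))\<^sup>2)"
    by (intro sum.cong refl) simp
  then show ?thesis unfolding objP_def Fq_def by simp
qed

lemma cstar_cong: assumes "\<forall>t\<in>{1..T}. s t = s' t" shows "cstar T N B y w lam R s = cstar T N B y w lam R s'"
proof -
  have "(\<Sum>t\<in>{1..T}. \<Sum>i\<in>{1..N}. w t i *\<^sub>R (transpose (B i) *v (transpose (R t) *v y t i - s t)))
      = (\<Sum>t\<in>{1..T}. \<Sum>i\<in>{1..N}. w t i *\<^sub>R (transpose (B i) *v (transpose (R t) *v y t i - s' t)))"
    by (rule sum.cong[OF refl]) (simp add: assms)
  then show ?thesis unfolding cstar_def by simp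
qed

lemma objQ_cong: assumes "\<forall>t\<in>{1..T}. s t = s' t"
  shows "objQ T N B y w om ka lam R s v Om = objQ T N B y w om ka lam R s' v Om"
proof -
  have "(\<Sum>t\<in>{1..T}. \<Sum>i\<in>{1..N}. w t i * (norm (transpose (R t) *v y t i - B i *v cstar T N B y w lam R s - s t))\<^sup>2)
      = (\<Sum>t\<in>{1..T}. \<Sum>i\<in>{1..N}. w t i * (norm (transpose (R t) *v y t i - B i *v cstar T N B y w lam R s - s' t))\<^sup>2)"
    by (rule sum.cong[OF refl]) (simp add: assms)
  then show ?thesis using cstar_cong[OF assms, of N B y w lam R] unfolding objQ_def Let_def by simp
qed

lemma feasP_Q:
  assumes "feasP T R p v Om c"
  shows "feasQ T R (\<lambda>t. transpose (R t) *v p t) v Om"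
proof -
  have "Om t *v (transpose (R (Suc t)) *v p (Suc t)) = transpose (R t) *v p t + v t" if "t \<in> {1..T-1}" for t
  proof -
    have R: "orthogonal_matrix (R t)" and O: "orthogonal_matrix (Om t)"
      and e: "p (Suc t) = p t + R t *v v t" "R (Suc t) = R t ** Om t"
      using assms that unfolding feasP_def by (auto intro: SO3_orth)
    have "Om t *v (transpose (R (Suc t)) *v p (Suc t)) = (Om t ** transpose (Om t)) *v (transpose (R t) *v p (Suc t))"
      by (simp add: e(2) matrix_transpose_mul matrix_vector_mul_assoc matrix_mul_assoc)
    also have "\<dots> = transpose (R t) *v p t + (transpose (R t) ** R t) *v v t"
      by (simp add: orth_MT[OF O] e(1) matrix_vector_right_distrib matrix_vector_mul_assoc)
    finally show ?thesis by (simp add: orth_TM[OF R])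
  qed
  then show ?thesis using assms unfolding feasP_def feasQ_def by auto
qed

lemma feasQ_P:
  assumes "feasQ T R s v Om" "\<forall>t\<in>{1..T}. transpose (R t) *v p t = s t" "(\<Sum>k\<in>UNIV. c $ k) = 1"
  shows "feasP T R p v Om c"
proof -
  have "p (Suc t) = p t + R t *v v t" if "t \<in> {1..T-1}" for t
  proof -
    have R: "orthogonal_matrix (R t)" and O: "orthogonal_matrix (Om t)"
      and e: "Om t *v s (Suc t) = s t + v t" "R (Suc t) = R t ** Om t"
      using assms that unfolding feasQ_def by (auto intro: SO3_orth)
    have "Suc t \<in> {1..T}" "t \<in> {1..T}" using that by auto
    then have st: "transpose (R t) *v p t = s t" "transpose (R (Suc t)) *v p (Suc t) = s (Suc t)"
      using assms(2) by blast+
    have s': "s (Suc t) = transpose (Om t) *v (transpose (R t) *v p (Suc t))"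
      using st(2) by (simp add: e(2) matrix_transpose_mul matrix_vector_mul_assoc)
    have "transpose (R t) *v p (Suc t) = Om t *v s (Suc t)"
    proof -
      have "Om t *v (transpose (Om t) *v x) = x" for x
        using matrix_vector_mul_assoc[of "Om t" "transpose (Om t)" x] orth_MT[OF O] by simp
      then show ?thesis unfolding s' by simp
    qed
    also have "\<dots> = transpose (R t) *v p t + v t" using e(1) st(1) by simp
    finally have "R t *v (transpose (R t) *v p (Suc t)) = R t *v (transpose (R t) *v p t + v t)" by simp
    then show ?thesis
      by (simp add: matrix_vector_mul_assoc orth_MT[OF R] matrix_vector_right_distrib)
  qed
  then show ?thesis using assms unfolding feasP_def feasQ_def by auto
qed


lemma reg_nonneg: "\<forall>t\<in>{1..T-2}. om t \<ge> 0 \<Longrightarrow> \<forall>t\<in>{1..T-2}. ka t \<ge> 0 \<Longrightarrow> reg T om ka v Om \<ge> 0"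
  unfolding reg_def by (intro sum_nonneg) auto

lemma Fq_nonneg: "\<forall>t\<in>{1..T}. \<forall>i\<in>{1..N}. w t i \<ge> 0 \<Longrightarrow> lam > 0 \<Longrightarrow> Fq T N B w lam a c \<ge> 0"
  unfolding Fq_def by (intro add_nonneg_nonneg sum_nonneg) auto

lemma Fq_cong: assumes "\<forall>t\<in>{1..T}. \<forall>i. a t i = a' t i" shows "Fq T N B w lam a c = Fq T N B w lam a' c"
proof -
  have "(\<Sum>t\<in>{1..T}. \<Sum>i\<in>{1..N}. w t i * (norm (a t i - B i *v c))\<^sup>2) = (\<Sum>t\<in>{1..T}. \<Sum>i\<in>{1..N}. w t i * (norm (a' t i - B i *v c))\<^sup>2)"
    by (rule sum.cong[OF refl]) (simp add: assms)
  then show ?thesis unfolding Fq_def by simp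
qed

lemma mat1_SO3: "mat 1 \<in> SO3"
  by (simp add: SO3_def rotation_matrix_def orthogonal_matrix_id det_I)

locale prob = qp T N B w lam for T N :: nat and B :: "nat \<Rightarrow> real^'k::finite^3" and w lam +
  fixes y :: "nat \<Rightarrow> nat \<Rightarrow> real^3" and om ka :: "nat \<Rightarrow> real"
  assumes omnn: "\<forall>t\<in>{1..T-2}. om t \<ge> 0" and kann: "\<forall>t\<in>{1..T-2}. ka t \<ge> 0"
begin

abbreviation "oP \<equiv> objP T N B y w om ka lam"
abbreviation "oQ \<equiv> objQ T N B y w om ka lam"
abbreviation "cs \<equiv> cstar T N B y w lam"

lemma sum_cstar: "(\<Sum>k\<in>UNIV. (cs R s :: real^'k) $ k) = 1"
  using sum_c0 unfolding cstar_eq ones_inner .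

lemma oQ_nonneg: "oQ R s v Om \<ge> 0"
  unfolding objQ_eq by (intro add_nonneg_nonneg Fq_nonneg[OF wpos lampos] reg_nonneg[OF omnn kann])

lemma oP_nonneg: "oP R p v Om (c::real^'k) \<ge> 0"
  unfolding objP_def using reg_nonneg[OF omnn kann] wpos lampos
  by (intro add_nonneg_nonneg sum_nonneg) auto

lemma Q_from_P:
  assumes "feasP T R p v Om (c::real^'k)"
  shows "oQ R (\<lambda>t. transpose (R t) *v p t) v Om + lam * (norm (c - cs R (\<lambda>t. transpose (R t) *v p t)))\<^sup>2
         \<le> oP R p v Om c"
proof -
  have orth: "\<forall>t\<in>{1..T}. orthogonal_matrix (R t)" using assms unfolding feasP_def by (auto intro: SO3_orth)
  have sc: "(\<Sum>k\<in>UNIV. c $ k) = 1" using assms unfolding feasP_def by auto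
  show ?thesis
    unfolding objP_eq[OF orth] objQ_eq cstar_eq using Fq_min[OF sc] by simp
qed

lemma P_from_Q:
  assumes "feasQ T R s v Om"
  shows "feasP T R (\<lambda>t. R t *v s t) v Om (cs R s :: real^'k)
     \<and> oP R (\<lambda>t. R t *v s t) v Om (cs R s) = oQ R s v Om"
proof -
  have orth: "\<forall>t\<in>{1..T}. orthogonal_matrix (R t)" using assms unfolding feasQ_def by (auto intro: SO3_orth)
  have e: "\<forall>t\<in>{1..T}. transpose (R t) *v (R t *v s t) = s t"
  proof
    fix t assume "t \<in> {1..T}"
    then show "transpose (R t) *v (R t *v s t) = s t"
      using matrix_vector_mul_assoc[of "transpose (R t)" "R t" "s t"] orth_TM[of "R t"] orth by simp
  qed
  have e2: "\<forall>t\<in>{1..T}. s t = transpose (R t) *v (R t *v s t)" using e by simp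
  have "feasP T R (\<lambda>t. R t *v s t) v Om (cs R s)"
    by (rule feasQ_P[OF assms _ sum_cstar]) (use e in simp)
  moreover have "oP R (\<lambda>t. R t *v s t) v Om (cs R s) = oQ R s v Om"
  proof -
    have "Fq T N B w lam (aQ y R (\<lambda>t. transpose (R t) *v (R t *v s t))) (cs R s) = Fq T N B w lam (aQ y R s) (cs R s)"
      by (rule Fq_cong) (simp add: aQ_def e)
    then show ?thesis unfolding objP_eq[OF orth] objQ_eq by simp
  qed
  ultimately show ?thesis by blast
qed

lemma Q_nonempty: "feasQ T (\<lambda>_. mat 1) (\<lambda>_. 0) (\<lambda>_. 0) (\<lambda>_. mat 1)"
  unfolding feasQ_def by (simp add: mat1_SO3)

lemma lam_sq_nonneg: "lam * (norm x)\<^sup>2 \<ge> 0"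
  using lampos by simp

lemma val_eq: "valP T N B y w om ka lam = valQ T N B y w om ka lam"
proof -
  define SP where "SP = {oP R p v Om c | R p v Om (c::real^'k). feasP T R p v Om c}"
  define SQ where "SQ = {oQ R s v Om | R s v Om. feasQ T R s v Om}"
  have vP: "valP T N B y w om ka lam = Inf SP" unfolding valP_def SP_def ..
  have vQ: "valQ T N B y w om ka lam = Inf SQ" unfolding valQ_def SQ_def ..
  have SQne: "SQ \<noteq> {}" unfolding SQ_def using Q_nonempty by blast
  have SPbd: "bdd_below SP" unfolding SP_def bdd_below_def using oP_nonneg by blast
  have SQbd: "bdd_below SQ" unfolding SQ_def bdd_below_def using oQ_nonneg by blast
  have sub: "SQ \<subseteq> SP"
  proof
    fix x assume "x \<in> SQ"
    then obtain R s v Om where x: "x = oQ R s v Om" and f: "feasQ T R s v Om" unfolding SQ_def by blast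
    note PQ = P_from_Q[OF f]
    have "oP R (\<lambda>t. R t *v s t) v Om (cs R s) \<in> SP" unfolding SP_def using conjunct1[OF PQ] by blast
    then show "x \<in> SP" using x conjunct2[OF PQ] by simp
  qed
  have SPne: "SP \<noteq> {}" using sub SQne by blast
  have "Inf SP \<le> Inf SQ" by (rule cInf_superset_mono[OF SQne SPbd sub])
  moreover have "Inf SQ \<le> Inf SP"
  proof (rule cInf_mono[OF SPne SQbd])
    fix b assume "b \<in> SP"
    then obtain R p v Om c where b: "b = oP R p v Om (c::real^'k)" "feasP T R p v Om c" unfolding SP_def by blast
    have "oQ R (\<lambda>t. transpose (R t) *v p t) v Om \<le> b"
      using Q_from_P[OF b(2)] lam_sq_nonneg[of "c - cs R (\<lambda>t. transpose (R t) *v p t)"] b(1) by linarith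
    moreover have "oQ R (\<lambda>t. transpose (R t) *v p t) v Om \<in> SQ"
      unfolding SQ_def using feasP_Q[OF b(2)] by blast
    ultimately show "\<exists>a\<in>SQ. a \<le> b" by blast
  qed
  ultimately show ?thesis unfolding vP vQ by simp
qed

lemma oP_cs:
  assumes "\<forall>t\<in>{1..T}. orthogonal_matrix (R t)"
  shows "oP R p v Om (cs R (\<lambda>t. transpose (R t) *v p t)) = oQ R (\<lambda>t. transpose (R t) *v p t) v Om"
  by (simp add: objP_eq[OF assms] objQ_eq)

lemma optP_le: "optP T N B y w om ka lam R p v Om c \<Longrightarrow> feasP T R' p' v' Om' c' \<Longrightarrow> oP R p v Om c \<le> oP R' p' v' Om' c'"
  unfolding optP_def by blast
lemma optQ_le: "optQ T N B y w om ka lam R s v Om \<Longrightarrow> feasQ T R' s' v' Om' \<Longrightarrow> oQ R s v Om \<le> oQ R' s' v' Om'"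
  unfolding optQ_def by blast

lemma opt_iff: "optP T N B y w om ka lam R p v Om (c::real^'k) \<longleftrightarrow>
   (optQ T N B y w om ka lam R (\<lambda>t. transpose (R t) *v p t) v Om
    \<and> c = cs R (\<lambda>t. transpose (R t) *v p t))"
  (is "?L \<longleftrightarrow> ?R")
proof
  let ?s = "\<lambda>t. transpose (R t) *v p t"
  assume L: ?L
  then have fP: "feasP T R p v Om c" unfolding optP_def by blast
  have orth: "\<forall>t\<in>{1..T}. orthogonal_matrix (R t)" using fP unfolding feasP_def by (auto intro: SO3_orth)
  have fQ: "feasQ T R ?s v Om" by (rule feasP_Q[OF fP])
  have fP2: "feasP T R p v Om (cs R ?s)" by (rule feasQ_P[OF fQ _ sum_cstar]) simp
  have le: "oP R p v Om c \<le> oP R p v Om (cs R ?s)" using optP_le[OF L fP2] .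
  have eq: "oP R p v Om (cs R ?s) = oQ R ?s v Om" by (rule oP_cs[OF orth])
  have "lam * (norm (c - cs R ?s))\<^sup>2 \<le> 0" using Q_from_P[OF fP] le eq by linarith
  then have "(norm (c - cs R ?s))\<^sup>2 \<le> 0" using lampos by (simp add: mult_le_0_iff)
  then have cc: "c = cs R ?s" by simp
  have "oQ R ?s v Om \<le> oQ R' s' v' Om'" if "feasQ T R' s' v' Om'" for R' s' v' Om'
  proof -
    note PQ = P_from_Q[OF that]
    have "oQ R ?s v Om = oP R p v Om c" using eq cc by simp
    also have "\<dots> \<le> oP R' (\<lambda>t. R' t *v s' t) v' Om' (cs R' s')" using optP_le[OF L conjunct1[OF PQ]] .
    also have "\<dots> = oQ R' s' v' Om'" using conjunct2[OF PQ] .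
    finally show ?thesis .
  qed
  then show ?R using fQ cc unfolding optQ_def by blast
next
  let ?s = "\<lambda>t. transpose (R t) *v p t"
  assume R: ?R
  then have fQ: "feasQ T R ?s v Om" and cc: "c = cs R ?s" unfolding optQ_def by blast+
  have orth: "\<forall>t\<in>{1..T}. orthogonal_matrix (R t)" using fQ unfolding feasQ_def by (auto intro: SO3_orth)
  have fP: "feasP T R p v Om c" unfolding cc by (rule feasQ_P[OF fQ _ sum_cstar]) simp
  have "oP R p v Om c \<le> oP R' p' v' Om' c'" if "feasP T R' p' v' Om' (c'::real^'k)" for R' p' v' Om' c'
  proof -
    have "oP R p v Om c = oQ R ?s v Om" using oP_cs[OF orth] cc by simp
    also have "\<dots> \<le> oQ R' (\<lambda>t. transpose (R' t) *v p' t) v' Om'"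
      using optQ_le[OF conjunct1[OF R] feasP_Q[OF that]] .
    also have "\<dots> \<le> oP R' p' v' Om' c'"
      using Q_from_P[OF that] lam_sq_nonneg[of "c' - cs R' (\<lambda>t. transpose (R' t) *v p' t)"] by linarith
    finally show ?thesis .
  qed
  then show ?L using fP unfolding optP_def by blast
qed

end


declare transpose_matrix_vector[simp del]

definition lin1 :: "qvar set \<Rightarrow> ((qvar \<Rightarrow> real) \<Rightarrow> real) \<Rightarrow> bool" where
  "lin1 I q \<longleftrightarrow> (\<exists>a0 a. \<forall>z. q z = a0 + (\<Sum>j\<in>I. a j * z j))"

lemma lin1_const[intro]: "lin1 I (\<lambda>z. c)"
  unfolding lin1_def by (rule exI[of _ c], rule exI[of _ "\<lambda>_. 0"]) simp

lemma lin1_var[intro]: "finite I \<Longrightarrow> j \<in> I \<Longrightarrow> lin1 I (\<lambda>z. z j)"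
  unfolding lin1_def
proof (rule exI[of _ 0], rule exI[of _ "\<lambda>k. if k = j then 1 else (0::real)"], rule allI)
  fix z :: "qvar \<Rightarrow> real" assume "finite I" "j \<in> I"
  have "(\<Sum>k\<in>I. (if k = j then 1 else 0) * z k) = (\<Sum>k\<in>I. if k = j then z k else 0)"
    by (rule sum.cong) auto
  also have "\<dots> = z j" using \<open>finite I\<close> \<open>j \<in> I\<close> by (simp add: sum.delta')
  finally show "z j = 0 + (\<Sum>k\<in>I. (if k = j then 1 else 0) * z k)" by simp
qed

lemma lin1_add[intro]: "lin1 I f \<Longrightarrow> lin1 I g \<Longrightarrow> lin1 I (\<lambda>z. f z + g z)"
  unfolding lin1_def
proof (elim exE)
  fix a0 a b0 b assume f: "\<forall>z. f z = a0 + (\<Sum>j\<in>I. a j * z j)" and g: "\<forall>z. g z = b0 + (\<Sum>j\<in>I. b j * z j)"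
  show "\<exists>a0 a. \<forall>z. f z + g z = a0 + (\<Sum>j\<in>I. a j * z j)"
    by (rule exI[of _ "a0 + b0"], rule exI[of _ "\<lambda>j. a j + b j"]) (simp add: f g algebra_simps sum.distrib)
qed

lemma lin1_cmult[intro]: "lin1 I f \<Longrightarrow> lin1 I (\<lambda>z. c * f z)"
  unfolding lin1_def
proof (elim exE)
  fix a0 a assume f: "\<forall>z. f z = a0 + (\<Sum>j\<in>I. a j * z j)"
  show "\<exists>a0 a. \<forall>z. c * f z = a0 + (\<Sum>j\<in>I. a j * z j)"
    by (rule exI[of _ "c * a0"], rule exI[of _ "\<lambda>j. c * a j"]) (simp add: f algebra_simps sum_distrib_left)
qed

lemma lin1_multc[intro]: "lin1 I f \<Longrightarrow> lin1 I (\<lambda>z. f z * c)"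
  using lin1_cmult[of I f c] by (simp add: mult.commute)

lemma lin1_neg[intro]: "lin1 I f \<Longrightarrow> lin1 I (\<lambda>z. - f z)"
  using lin1_cmult[of I f "-1"] by simp

lemma lin1_diff[intro]: "lin1 I f \<Longrightarrow> lin1 I g \<Longrightarrow> lin1 I (\<lambda>z. f z - g z)"
  using lin1_add[of I f "\<lambda>z. - g z"] lin1_neg[of I g] by simp

lemma lin1_sum[intro]: "(\<And>x. x \<in> A \<Longrightarrow> lin1 I (f x)) \<Longrightarrow> lin1 I (\<lambda>z. \<Sum>x\<in>A. f x z)"
proof (induction A rule: infinite_finite_induct)
  case (insert x F)
  then have "lin1 I (\<lambda>z. f x z + (\<Sum>x\<in>F. f x z))" by (intro lin1_add) auto
  then show ?case using insert by simp
qed auto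

lemma deg2_lin[intro]: "lin1 I f \<Longrightarrow> deg2_poly I f"
  unfolding lin1_def deg2_poly_def
proof (elim exE)
  fix a0 a assume f: "\<forall>z. f z = a0 + (\<Sum>j\<in>I. a j * z j)"
  show "\<exists>a0 a b. \<forall>z. f z = a0 + (\<Sum>j\<in>I. a j * z j) + (\<Sum>j\<in>I. \<Sum>k\<in>I. b j k * z j * z k)"
    by (rule exI[of _ a0], rule exI[of _ a], rule exI[of _ "\<lambda>j k. 0"]) (simp add: f)
qed

lemma deg2_add[intro]: "deg2_poly I f \<Longrightarrow> deg2_poly I g \<Longrightarrow> deg2_poly I (\<lambda>z. f z + g z)"
  unfolding deg2_poly_def
proof (elim exE)
  fix a0 a b0 b c d assume f: "\<forall>z. f z = a0 + (\<Sum>j\<in>I. a j * z j) + (\<Sum>j\<in>I. \<Sum>k\<in>I. b j k * z j * z k)"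
    and g: "\<forall>z. g z = c + (\<Sum>j\<in>I. d j * z j) + (\<Sum>j\<in>I. \<Sum>k\<in>I. b0 j k * z j * z k)"
  show "\<exists>a0 a b. \<forall>z. f z + g z = a0 + (\<Sum>j\<in>I. a j * z j) + (\<Sum>j\<in>I. \<Sum>k\<in>I. b j k * z j * z k)"
  proof (rule exI[of _ "a0 + c"], rule exI[of _ "\<lambda>j. a j + d j"], rule exI[of _ "\<lambda>j k. b j k + b0 j k"], rule allI)
    fix z :: "qvar \<Rightarrow> real"
    have s1: "(\<Sum>j\<in>I. (a j + d j) * z j) = (\<Sum>j\<in>I. a j * z j) + (\<Sum>j\<in>I. d j * z j)"
      by (simp only: distrib_right sum.distrib)
    have s2: "(\<Sum>j\<in>I. \<Sum>k\<in>I. (b j k + b0 j k) * z j * z k) = (\<Sum>j\<in>I. \<Sum>k\<in>I. b j k * z j * z k) + (\<Sum>j\<in>I. \<Sum>k\<in>I. b0 j k * z j * z k)"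
      by (simp only: distrib_right sum.distrib)
    show "f z + g z = a0 + c + (\<Sum>j\<in>I. (a j + d j) * z j) + (\<Sum>j\<in>I. \<Sum>k\<in>I. (b j k + b0 j k) * z j * z k)"
      unfolding s1 s2 using f[rule_format, of z] g[rule_format, of z] by linarith
  qed
qed

lemma deg2_cmult[intro]: "deg2_poly I f \<Longrightarrow> deg2_poly I (\<lambda>z. c * f z)"
  unfolding deg2_poly_def
proof (elim exE)
  fix a0 a b assume f: "\<forall>z. f z = a0 + (\<Sum>j\<in>I. a j * z j) + (\<Sum>j\<in>I. \<Sum>k\<in>I. b j k * z j * z k)"
  show "\<exists>a0 a b. \<forall>z. c * f z = a0 + (\<Sum>j\<in>I. a j * z j) + (\<Sum>j\<in>I. \<Sum>k\<in>I. b j k * z j * z k)"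
  proof (rule exI[of _ "c * a0"], rule exI[of _ "\<lambda>j. c * a j"], rule exI[of _ "\<lambda>j k. c * b j k"], rule allI)
    fix z :: "qvar \<Rightarrow> real"
    have s1: "(\<Sum>j\<in>I. (c * a j) * z j) = c * (\<Sum>j\<in>I. a j * z j)"
      by (simp only: sum_distrib_left mult.assoc)
    have s2: "(\<Sum>j\<in>I. \<Sum>k\<in>I. (c * b j k) * z j * z k) = c * (\<Sum>j\<in>I. \<Sum>k\<in>I. b j k * z j * z k)"
      by (simp only: sum_distrib_left mult.assoc)
    show "c * f z = c * a0 + (\<Sum>j\<in>I. (c * a j) * z j) + (\<Sum>j\<in>I. \<Sum>k\<in>I. (c * b j k) * z j * z k)"
      unfolding s1 s2 using f[rule_format, of z] by (simp add: distrib_left)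
  qed
qed

lemma deg2_neg[intro]: "deg2_poly I f \<Longrightarrow> deg2_poly I (\<lambda>z. - f z)"
  using deg2_cmult[of I f "-1"] by simp

lemma deg2_diff[intro]: "deg2_poly I f \<Longrightarrow> deg2_poly I g \<Longrightarrow> deg2_poly I (\<lambda>z. f z - g z)"
  using deg2_add[of I f "\<lambda>z. - g z"] deg2_neg[of I g] by simp

lemma deg2_sum[intro]: "(\<And>x. x \<in> A \<Longrightarrow> deg2_poly I (f x)) \<Longrightarrow> deg2_poly I (\<lambda>z. \<Sum>x\<in>A. f x z)"
proof (induction A rule: infinite_finite_induct)
  case (insert x F)
  then have "deg2_poly I (\<lambda>z. f x z + (\<Sum>x\<in>F. f x z))" by (intro deg2_add) auto
  then show ?case using insert by simp
qed auto

lemma deg2_mult[intro]: "lin1 I f \<Longrightarrow> lin1 I g \<Longrightarrow> deg2_poly I (\<lambda>z. f z * g z)"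
  unfolding lin1_def deg2_poly_def
proof (elim exE)
  fix a0 a b0 b assume f: "\<forall>z. f z = a0 + (\<Sum>j\<in>I. a j * z j)" and g: "\<forall>z. g z = b0 + (\<Sum>j\<in>I. b j * z j)"
  show "\<exists>a0 a b. \<forall>z. f z * g z = a0 + (\<Sum>j\<in>I. a j * z j) + (\<Sum>j\<in>I. \<Sum>k\<in>I. b j k * z j * z k)"
  proof (rule exI[of _ "a0 * b0"], rule exI[of _ "\<lambda>j. a0 * b j + b0 * a j"], rule exI[of _ "\<lambda>j k. a j * b k"], rule allI)
    fix z :: "qvar \<Rightarrow> real"
    have p: "(\<Sum>j\<in>I. a j * z j) * (\<Sum>k\<in>I. b k * z k) = (\<Sum>j\<in>I. \<Sum>k\<in>I. a j * b k * z j * z k)"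
      unfolding sum_product by (intro sum.cong refl) (simp add: ac_simps)
    have l: "a0 * (\<Sum>k\<in>I. b k * z k) + b0 * (\<Sum>j\<in>I. a j * z j) = (\<Sum>j\<in>I. (a0 * b j + b0 * a j) * z j)"
      by (simp add: sum_distrib_left sum.distrib[symmetric] algebra_simps)
    have "f z * g z = a0 * b0 + (a0 * (\<Sum>k\<in>I. b k * z k) + b0 * (\<Sum>j\<in>I. a j * z j)) + (\<Sum>j\<in>I. a j * z j) * (\<Sum>k\<in>I. b k * z k)"
      using f g by (simp add: algebra_simps)
    then show "f z * g z = a0 * b0 + (\<Sum>j\<in>I. (a0 * b j + b0 * a j) * z j) + (\<Sum>j\<in>I. \<Sum>k\<in>I. a j * b k * z j * z k)"
      unfolding p l .
  qed
qed

lemma deg2_sq[intro]: "lin1 I f \<Longrightarrow> deg2_poly I (\<lambda>z. (f z)\<^sup>2)"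
  using deg2_mult[of I f f] by (simp add: power2_eq_square)


definition linv :: "qvar set \<Rightarrow> ((qvar \<Rightarrow> real) \<Rightarrow> real^'n) \<Rightarrow> bool" where
  "linv I f \<longleftrightarrow> (\<forall>k. lin1 I (\<lambda>z. f z $ k))"

lemma linv_add[intro]: "linv I f \<Longrightarrow> linv I g \<Longrightarrow> linv I (\<lambda>z. f z + g z)"
  unfolding linv_def by auto
lemma linv_diff[intro]: "linv I f \<Longrightarrow> linv I g \<Longrightarrow> linv I (\<lambda>z. f z - g z)"
  unfolding linv_def by auto
lemma linv_scaleR[intro]: "linv I f \<Longrightarrow> linv I (\<lambda>z. c *\<^sub>R f z)"
  unfolding linv_def by auto
lemma linv_const[intro]: "linv I (\<lambda>z. c)"
  unfolding linv_def by auto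
lemma linv_sum[intro]: "(\<And>x. x \<in> A \<Longrightarrow> linv I (f x)) \<Longrightarrow> linv I (\<lambda>z. \<Sum>x\<in>A. f x z)"
  unfolding linv_def by (simp add: sum_component) (intro allI lin1_sum, auto)
lemma linv_mv[intro]: "linv I f \<Longrightarrow> linv I (\<lambda>z. (A::real^'n^'m) *v f z)"
  unfolding linv_def matrix_vector_mult_def by (simp) (intro allI lin1_sum lin1_cmult, auto)

definition Rz :: "(qvar \<Rightarrow> real) \<Rightarrow> nat \<Rightarrow> real^3^3" where "Rz z t = (\<chi> i j. z (VR t i j))"
definition sz :: "(qvar \<Rightarrow> real) \<Rightarrow> nat \<Rightarrow> real^3" where "sz z t = (\<chi> i. z (VS t i))"
definition vz :: "(qvar \<Rightarrow> real) \<Rightarrow> nat \<Rightarrow> real^3" where "vz z t = (\<chi> i. z (VV t i))"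
definition Omz :: "(qvar \<Rightarrow> real) \<Rightarrow> nat \<Rightarrow> real^3^3" where "Omz z t = (\<chi> i j. z (VOm t i j))"

lemma z_entries: "Rz (entries R s v Om) = R" "sz (entries R s v Om) = s" "vz (entries R s v Om) = v"
  "Omz (entries R s v Om) = Om"
  by (simp_all add: Rz_def sz_def vz_def Omz_def entries_def vec_eq_iff fun_eq_iff)

lemma qvars_mem[simp]: "VR t i j \<in> qvars T \<longleftrightarrow> t \<in> {1..T}" "VS t i \<in> qvars T \<longleftrightarrow> t \<in> {1..T}"
  "VV t i \<in> qvars T \<longleftrightarrow> t \<in> {1..T-1}" "VOm t i j \<in> qvars T \<longleftrightarrow> t \<in> {1..T-1}"
  by (auto simp: qvars_def)

lemma finite_qvars[simp]: "finite (qvars T)"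
proof -
  have "qvars T = (\<lambda>(t,i,j). VR t i j) ` ({1..T} \<times> UNIV) \<union> (\<lambda>(t,i). VS t i) ` ({1..T} \<times> UNIV)
     \<union> (\<lambda>(t,i). VV t i) ` ({1..T-1} \<times> UNIV) \<union> (\<lambda>(t,i,j). VOm t i j) ` ({1..T-1} \<times> UNIV)"
    by (auto simp: qvars_def image_def)
  then show ?thesis by simp
qed

lemma linv_Rt[intro]: "t \<in> {1..T} \<Longrightarrow> linv (qvars T) (\<lambda>z. transpose (Rz z t) *v yv)"
  unfolding linv_def matrix_vector_mult_def transpose_def Rz_def
  by simp (intro allI lin1_sum lin1_multc lin1_var, auto)

lemma linv_s[intro]: "t \<in> {1..T} \<Longrightarrow> linv (qvars T) (\<lambda>z. sz z t)"
  unfolding linv_def sz_def by (auto intro: lin1_var)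

lemma vec_normsq: "(norm (x::real^'n))\<^sup>2 = (\<Sum>k\<in>UNIV. x $ k * x $ k)"
  by (simp add: power2_norm_eq_inner inner_vec_def)

lemma mat_normsq: "(norm (x::real^'n^'m))\<^sup>2 = (\<Sum>i\<in>UNIV. \<Sum>j\<in>UNIV. x $ i $ j * x $ i $ j)"
  by (simp add: power2_norm_eq_inner inner_vec_def)

lemma deg2_normsq[intro]: "linv I F \<Longrightarrow> deg2_poly I (\<lambda>z. (norm (F z :: real^'n))\<^sup>2)"
  unfolding vec_normsq linv_def by (intro deg2_sum deg2_mult) auto

lemma deg2_mnormsq[intro]: "(\<And>i j. lin1 I (\<lambda>z. F z $ i $ j)) \<Longrightarrow> deg2_poly I (\<lambda>z. (norm (F z :: real^'n^'m))\<^sup>2)"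
  unfolding mat_normsq by (intro deg2_sum deg2_mult) auto

lemma linv_cstar: "linv (qvars T) (\<lambda>z. cstar T N B y w lam (Rz z) (sz z))"
  unfolding cstar_def by (intro linv_add linv_scaleR linv_mv linv_sum linv_diff linv_Rt linv_s linv_const)

lemma deg2_obj: "deg2_poly (qvars T) (\<lambda>z. objQ T N B y w om ka lam (Rz z) (sz z) (vz z) (Omz z))"
proof -
  have r: "deg2_poly (qvars T) (\<lambda>z. reg T om ka (vz z) (Omz z))"
    unfolding reg_def
  proof (intro deg2_sum deg2_add deg2_cmult deg2_normsq deg2_mnormsq)
    fix t assume t: "t \<in> {1..T-2}"
    then have t1: "t \<in> {1..T-1}" "Suc t \<in> {1..T-1}" by auto
    show "linv (qvars T) (\<lambda>z. vz z (Suc t) - vz z t)"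
      unfolding linv_def vz_def using t1 by (auto intro!: lin1_diff lin1_var)
    fix i j
    show "lin1 (qvars T) (\<lambda>z. (Omz z (Suc t) - Omz z t) $ i $ j)"
      unfolding Omz_def using t1 by (auto intro!: lin1_diff lin1_var)
  qed
  show ?thesis unfolding objQ_def Let_def
    by (intro deg2_add r deg2_sum deg2_cmult deg2_normsq linv_diff linv_mv linv_cstar linv_Rt linv_s linv_const) auto
qed

definition cof3 :: "real^3^3 \<Rightarrow> real^3^3" where
  "cof3 X = vector [cross3 (X$2) (X$3), cross3 (X$3) (X$1), cross3 (X$1) (X$2)]"

lemma cof3_mul: "cof3 X ** transpose X = mat (det X)"
  unfolding cof3_def cross3_def
  by (simp add: vec_eq_iff forall_3 sum_3 det_3 matrix_matrix_mult_def transpose_def mat_def algebra_simps)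

lemma rot_iff: "rotation_matrix X \<longleftrightarrow> transpose X ** X = mat 1 \<and> X ** transpose X = mat 1 \<and> cof3 X = X"
proof
  assume r: "rotation_matrix X"
  then have o: "transpose X ** X = mat 1" "X ** transpose X = mat 1" and d: "det X = 1"
    by (auto simp: rotation_matrix_def orthogonal_matrix_def)
  have "cof3 X = cof3 X ** (transpose X ** X)" using o by simp
  also have "\<dots> = (cof3 X ** transpose X) ** X" by (simp add: matrix_mul_assoc)
  also have "\<dots> = X" by (simp add: cof3_mul d)
  finally show "transpose X ** X = mat 1 \<and> X ** transpose X = mat 1 \<and> cof3 X = X" using o by simp
next
  assume h: "transpose X ** X = mat 1 \<and> X ** transpose X = mat 1 \<and> cof3 X = X"
  then have "mat (det X) = (mat 1 :: real^3^3)" using cof3_mul[of X] by simp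
  then have "(mat (det X) :: real^3^3) $ 1 $ 1 = (mat 1 :: real^3^3) $ 1 $ 1" by simp
  then have "det X = 1" by (simp add: mat_def)
  then show "rotation_matrix X" using h by (simp add: rotation_matrix_def orthogonal_matrix_def)
qed


definition pairs3 :: "(3 \<times> 3) list" where "pairs3 = [(i,j). i \<leftarrow> [1,2,3], j \<leftarrow> [1,2,3]]"

lemma set3: "set [1,2,3::3] = UNIV"
  using exhaust_3 by auto

lemma set_pairs3: "set pairs3 = UNIV"
  unfolding pairs3_def using exhaust_3 by auto

lemma deg2_const[intro]: "deg2_poly I (\<lambda>z. c)"
  by (intro deg2_lin lin1_const)

lemma deg2_var[intro]: "finite I \<Longrightarrow> j \<in> I \<Longrightarrow> deg2_poly I (\<lambda>z. z j)"
  by (intro deg2_lin lin1_var)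

definition ent2 :: "((qvar \<Rightarrow> real) \<Rightarrow> real^3^3) \<Rightarrow> ((qvar \<Rightarrow> real) \<Rightarrow> real) list" where
  "ent2 F = map (\<lambda>p z. F z $ fst p $ snd p) pairs3"

definition ent1 :: "((qvar \<Rightarrow> real) \<Rightarrow> real^3) \<Rightarrow> ((qvar \<Rightarrow> real) \<Rightarrow> real) list" where
  "ent1 F = map (\<lambda>k z. F z $ k) [1,2,3]"

lemma ent2_iff: "(\<forall>q\<in>set (ent2 F). q z = 0) \<longleftrightarrow> F z = 0"
  unfolding ent2_def by (auto simp: set_pairs3 vec_eq_iff)

lemma ent1_iff: "(\<forall>q\<in>set (ent1 F). q z = 0) \<longleftrightarrow> F z = 0"
  unfolding ent1_def by (auto simp: vec_eq_iff forall_3)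

lemma ent2_mem: "q \<in> set (ent2 F) \<Longrightarrow> \<exists>i j. q = (\<lambda>z. F z $ i $ j)"
  unfolding ent2_def by auto

lemma ent1_mem: "q \<in> set (ent1 F) \<Longrightarrow> \<exists>k. q = (\<lambda>z. F z $ k)"
  unfolding ent1_def by auto

definition rotc :: "((qvar \<Rightarrow> real) \<Rightarrow> real^3^3) \<Rightarrow> ((qvar \<Rightarrow> real) \<Rightarrow> real) list" where
  "rotc Xf = ent2 (\<lambda>z. transpose (Xf z) ** Xf z - mat 1) @ ent2 (\<lambda>z. Xf z ** transpose (Xf z) - mat 1)
           @ ent2 (\<lambda>z. cof3 (Xf z) - Xf z)"

lemma rotc_iff: "(\<forall>q\<in>set (rotc Xf). q z = 0) \<longleftrightarrow> rotation_matrix (Xf z)"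
  unfolding rot_iff rotc_def set_append ball_Un ent2_iff by simp

lemma cof3_deg2:
  assumes "\<And>i j. lin1 I (\<lambda>z. Xf z $ i $ j)"
  shows "deg2_poly I (\<lambda>z. cof3 (Xf z) $ i $ j)"
  using exhaust_3[of i] exhaust_3[of j]
  by (auto simp: cof3_def cross3_def intro!: deg2_diff deg2_mult assms)

lemma rotc_deg2:
  assumes "\<And>i j. lin1 I (\<lambda>z. Xf z $ i $ j)" "q \<in> set (rotc Xf)"
  shows "deg2_poly I q"
  using assms(2) unfolding rotc_def set_append
proof (elim UnE)
  assume "q \<in> set (ent2 (\<lambda>z. transpose (Xf z) ** Xf z - mat 1))"
  then obtain i j where q: "q = (\<lambda>z. (transpose (Xf z) ** Xf z - mat 1) $ i $ j)" by (blast dest: ent2_mem)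
  show ?thesis unfolding q
    by (simp add: matrix_matrix_mult_def transpose_def) (intro deg2_diff deg2_sum deg2_mult assms(1) deg2_const)
next
  assume "q \<in> set (ent2 (\<lambda>z. Xf z ** transpose (Xf z) - mat 1))"
  then obtain i j where q: "q = (\<lambda>z. (Xf z ** transpose (Xf z) - mat 1) $ i $ j)" by (blast dest: ent2_mem)
  show ?thesis unfolding q
    by (simp add: matrix_matrix_mult_def transpose_def) (intro deg2_diff deg2_sum deg2_mult assms(1) deg2_const)
next
  assume "q \<in> set (ent2 (\<lambda>z. cof3 (Xf z) - Xf z))"
  then obtain i j where q: "q = (\<lambda>z. (cof3 (Xf z) - Xf z) $ i $ j)" by (blast dest: ent2_mem)
  show ?thesis unfolding q
    by simp (intro deg2_diff cof3_deg2 assms(1) deg2_lin)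
qed

definition motc :: "nat \<Rightarrow> ((qvar \<Rightarrow> real) \<Rightarrow> real) list" where
  "motc t = ent1 (\<lambda>z. Omz z t *v sz z (Suc t) - (sz z t + vz z t))
          @ ent2 (\<lambda>z. Rz z (Suc t) - Rz z t ** Omz z t)"

lemma motc_iff: "(\<forall>q\<in>set (motc t). q z = 0) \<longleftrightarrow>
   (Omz z t *v sz z (Suc t) = sz z t + vz z t \<and> Rz z (Suc t) = Rz z t ** Omz z t)"
  unfolding motc_def set_append ball_Un ent1_iff ent2_iff by simp

lemma motc_deg2:
  assumes "t \<in> {1..T-1}" "q \<in> set (motc t)"
  shows "deg2_poly (qvars T) q"
proof -
  have t: "t \<in> {1..T}" "Suc t \<in> {1..T}" using assms(1) by auto
  show ?thesis
    using assms(2) unfolding motc_def set_append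
  proof (elim UnE)
    assume "q \<in> set (ent1 (\<lambda>z. Omz z t *v sz z (Suc t) - (sz z t + vz z t)))"
    then obtain k where q: "q = (\<lambda>z. (Omz z t *v sz z (Suc t) - (sz z t + vz z t)) $ k)" by (blast dest: ent1_mem)
    show ?thesis unfolding q using t assms(1)
      by (simp add: matrix_vector_mult_def Omz_def sz_def vz_def)
        (intro deg2_diff deg2_add deg2_sum deg2_mult deg2_var lin1_var finite_qvars, auto)
  next
    assume "q \<in> set (ent2 (\<lambda>z. Rz z (Suc t) - Rz z t ** Omz z t))"
    then obtain i j where q: "q = (\<lambda>z. (Rz z (Suc t) - Rz z t ** Omz z t) $ i $ j)" by (blast dest: ent2_mem)
    show ?thesis unfolding q using t assms(1)
      by (simp add: matrix_matrix_mult_def Omz_def Rz_def)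
        (intro deg2_diff deg2_add deg2_sum deg2_mult deg2_var lin1_var finite_qvars, auto)
  qed
qed

definition qsQ :: "nat \<Rightarrow> ((qvar \<Rightarrow> real) \<Rightarrow> real) list" where
  "qsQ T = concat (map (\<lambda>t. rotc (\<lambda>z. Rz z t)) [1..<Suc T]) @ concat (map (\<lambda>t. rotc (\<lambda>z. Omz z t)) [1..<T])
          @ concat (map motc [1..<T])"

lemma set_upt1: "set [1..<T] = {1..T-1}" by auto

lemma lin1_Rz: "t \<in> {1..T} \<Longrightarrow> lin1 (qvars T) (\<lambda>z. Rz z t $ i $ j)"
  unfolding Rz_def by simp (rule lin1_var, simp_all)

lemma lin1_Omz: "t \<in> {1..T-1} \<Longrightarrow> lin1 (qvars T) (\<lambda>z. Omz z t $ i $ j)"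
  unfolding Omz_def by simp (rule lin1_var, simp_all)

lemma qsQ_deg2: assumes "q \<in> set (qsQ T)" shows "deg2_poly (qvars T) q"
proof -
  have "(\<exists>t\<in>{1..T}. q \<in> set (rotc (\<lambda>z. Rz z t))) \<or> (\<exists>t\<in>{1..T-1}. q \<in> set (rotc (\<lambda>z. Omz z t)))
     \<or> (\<exists>t\<in>{1..T-1}. q \<in> set (motc t))"
    using assms unfolding qsQ_def set_append set_concat set_map set_upt1
    by (auto simp del: atLeastAtMost_iff simp: atLeastLessThanSuc_atLeastAtMost)
  then show ?thesis
  proof (elim disjE bexE)
    fix t assume t: "t \<in> {1..T}" and q: "q \<in> set (rotc (\<lambda>z. Rz z t))"
    show ?thesis by (rule rotc_deg2[OF lin1_Rz[OF t] q])
  next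
    fix t assume t: "t \<in> {1..T-1}" and q: "q \<in> set (rotc (\<lambda>z. Omz z t))"
    show ?thesis by (rule rotc_deg2[OF lin1_Omz[OF t] q])
  next
    fix t assume t: "t \<in> {1..T-1}" and q: "q \<in> set (motc t)"
    show ?thesis by (rule motc_deg2[OF t q])
  qed
qed

lemma qsQ_iff: "feasQ T R s v Om \<longleftrightarrow> (\<forall>q\<in>set (qsQ T). q (entries R s v Om) = 0)"
proof -
  let ?z = "entries R s v Om"
  have "(\<forall>q\<in>set (qsQ T). q ?z = 0) \<longleftrightarrow>
     (\<forall>t\<in>{1..T}. \<forall>q\<in>set (rotc (\<lambda>z. Rz z t)). q ?z = 0) \<and>
     (\<forall>t\<in>{1..T-1}. \<forall>q\<in>set (rotc (\<lambda>z. Omz z t)). q ?z = 0) \<and>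
     (\<forall>t\<in>{1..T-1}. \<forall>q\<in>set (motc t). q ?z = 0)"
    unfolding qsQ_def set_append set_concat set_map set_upt1
    by (auto simp del: atLeastAtMost_iff)
  also have "\<dots> \<longleftrightarrow> feasQ T R s v Om"
    unfolding rotc_iff motc_iff z_entries feasQ_def SO3_def by auto
  finally show ?thesis ..
qed


theorem proposition2:
  fixes T N :: nat and B :: "nat \<Rightarrow> real^'k::finite^3" and y :: "nat \<Rightarrow> nat \<Rightarrow> real^3"
    and w :: "nat \<Rightarrow> nat \<Rightarrow> real" and om ka :: "nat \<Rightarrow> real" and lam :: real
  assumes "T \<ge> 2" and "N \<ge> 1"
    and "\<forall>t\<in>{1..T}. \<forall>i\<in>{1..N}. w t i > 0"
    and "\<forall>t\<in>{1..T-2}. om t \<ge> 0" and "\<forall>t\<in>{1..T-2}. ka t \<ge> 0"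
    and "lam > 0"
  shows "valP T N B y w om ka lam = valQ T N B y w om ka lam
    \<and> (\<forall>R p v Om (c::real^'k).
         optP T N B y w om ka lam R p v Om c \<longleftrightarrow>
           (optQ T N B y w om ka lam R (\<lambda>t. transpose (R t) *v p t) v Om
            \<and> c = cstar T N B y w lam R (\<lambda>t. transpose (R t) *v p t)))
    \<and> (\<exists>q. deg2_poly (qvars T) q \<and>
         (\<forall>R s v Om. objQ T N B y w om ka lam R s v Om = q (entries R s v Om)))
    \<and> (\<exists>qs. (\<forall>q\<in>set qs. deg2_poly (qvars T) q) \<and>
         (\<forall>R s v Om. feasQ T R s v Om \<longleftrightarrow> (\<forall>q\<in>set qs. q (entries R s v Om) = 0)))"
proof -
  have wnn: "\<forall>t\<in>{1..T}. \<forall>i\<in>{1..N}. w t i \<ge> 0" using assms(3) by (meson less_imp_le)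
  interpret prob T N B w lam y om ka
    using wnn assms(4-6) by unfold_locales auto
  have p3: "\<exists>q. deg2_poly (qvars T) q \<and>
         (\<forall>R s v Om. objQ T N B y w om ka lam R s v Om = q (entries R s v Om))"
    by (rule exI[of _ "\<lambda>z. objQ T N B y w om ka lam (Rz z) (sz z) (vz z) (Omz z)"]) (simp add: deg2_obj z_entries)
  have p4: "\<exists>qs. (\<forall>q\<in>set qs. deg2_poly (qvars T) q) \<and>
         (\<forall>R s v Om. feasQ T R s v Om \<longleftrightarrow> (\<forall>q\<in>set qs. q (entries R s v Om) = 0))"
    by (rule exI[of _ "qsQ T"]) (simp add: qsQ_deg2 qsQ_iff)
  show ?thesis using val_eq opt_iff p3 p4 by blast
qed

end
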